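(* For an integer $n\ge2$ let $\Pi^{\mathrm{rot}}_i=\frac1n(\mathbb{I}+\hat n_i\cdot\vec\sigma)$, $i=1,\dots,n$, with $\hat n_i=(\cos\frac{2\pi i}{n},0,\sin\frac{2\pi i}{n})$. Then $$R^p(\{\Pi^{\mathrm{rot}}_i\})=\begin{cases}\frac1n\cot\left(\frac{\pi}{2n}\right)\cos\left(\frac{\pi}{2n}\right)&n\text{ odd},\\ \frac2n\cot\left(\frac{\pi}{n}\right)&n\text{ even}.\end{cases}$$
   Context: A qubit POVM $\{\Pi_i\}$ simulates a family $\{M_{a|x}\}$ if $M_{a|x}=\sum_i p(a|x,i)\Pi_i$ with $p(a|x,i)\ge0$, $\sum_a p(a|x,i)=1$. $\mathcal{P}^p_r$ is the family of two-outcome POVMs $\{\tfrac12(\mathbb{I}\pm r\hat n\cdot\vec\sigma)\}$ over all unit vectors $\hat n=(n_x,0,n_z)$. For a POVM $\{\Pi_i\}$, $R^p(\{\Pi_i\})$ is the largest $r$ such that $\{\Pi_i\}$ simulates $\mathcal{P}^p_r$. *)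

theory Defs
  imports "HOL-Analysis.Analysis"
begin

type_synonym qop = "complex^2^2"

definition mat2 :: "complex \<Rightarrow> complex \<Rightarrow> complex \<Rightarrow> complex \<Rightarrow> qop" where
  "mat2 a b c d = (\<chi> i j. if i = 1 then (if j = 1 then a else b) else (if j = 1 then c else d))"

definition Id2 :: qop where "Id2 = mat2 1 0 0 1"
definition sigma_x :: qop where "sigma_x = mat2 0 1 1 0"
definition sigma_y :: qop where "sigma_y = mat2 0 (-\<i>) \<i> 0"
definition sigma_z :: qop where "sigma_z = mat2 1 0 0 (-1)"

definition dot_sigma :: "real \<times> real \<times> real \<Rightarrow> qop" where
  "dot_sigma v = (case v of (nx, ny, nz) \<Rightarrow> nx *\<^sub>R sigma_x + ny *\<^sub>R sigma_y + nz *\<^sub>R sigma_z)"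

definition simulates :: "'i set \<Rightarrow> ('i \<Rightarrow> qop) \<Rightarrow> 'x set \<Rightarrow> 'a set \<Rightarrow> ('a \<Rightarrow> 'x \<Rightarrow> qop) \<Rightarrow> bool" where
  "simulates I Povm X A M \<longleftrightarrow>
     (\<exists>p :: 'a \<Rightarrow> 'x \<Rightarrow> 'i \<Rightarrow> real.
        (\<forall>x\<in>X. \<forall>a\<in>A. \<forall>i\<in>I. p a x i \<ge> 0) \<and>
        (\<forall>x\<in>X. \<forall>i\<in>I. (\<Sum>a\<in>A. p a x i) = 1) \<and>
        (\<forall>x\<in>X. \<forall>a\<in>A. M a x = (\<Sum>i\<in>I. p a x i *\<^sub>R Povm i)))"

text \<open>The family P^p_r: x ranges over unit vectors (nx, 0, nz), given by the pair (nx, nz);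
  outcome a = True is "+", a = False is "-".\<close>
definition unit_xz :: "(real \<times> real) set" where
  "unit_xz = {(nx, nz). nx\<^sup>2 + nz\<^sup>2 = 1}"

definition Pp :: "real \<Rightarrow> bool \<Rightarrow> real \<times> real \<Rightarrow> qop" where
  "Pp r a x = (case x of (nx, nz) \<Rightarrow>
      (1/2) *\<^sub>R (Id2 + (if a then r else - r) *\<^sub>R dot_sigma (nx, 0, nz)))"

definition Rp :: "'i set \<Rightarrow> ('i \<Rightarrow> qop) \<Rightarrow> real" where
  "Rp I Povm = Sup {r. simulates I Povm unit_xz UNIV (Pp r)}"

definition Pi_rot :: "nat \<Rightarrow> nat \<Rightarrow> qop" where
  "Pi_rot n i = (1 / real n) *\<^sub>R (Id2 + dot_sigma (cos (2*pi*real i/real n), 0, sin (2*pi*real i/real n)))"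

end

theory Submission
  imports Defs
begin



lemma tele_sin:
  fixes a x :: real
  shows "2 * sin (x/2) * (\<Sum>i\<in>{1..K}. sin (a + real i * x)) = cos (a + x/2) - cos (a + (real K + 1/2) * x)"
proof (induction K)
  case 0 then show ?case by simp
next
  case (Suc K)
  have e: "2 * sin (x/2) * sin (a + real (Suc K) * x) = cos (a + (real K + 1/2) * x) - cos (a + (real (Suc K) + 1/2) * x)"
  proof -
    have "2 * sin (x/2) * sin (a + real (Suc K) * x) = cos (x/2 - (a + real (Suc K) * x)) - cos (x/2 + (a + real (Suc K) * x))"
      using sin_times_sin[of "x/2" "a + real (Suc K) * x"] by simp
    also have "cos (x/2 - (a + real (Suc K) * x)) = cos (a + (real K + 1/2) * x)"
      by (subst cos_minus[symmetric]) (simp add: algebra_simps)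
    also have "x/2 + (a + real (Suc K) * x) = a + (real (Suc K) + 1/2) * x"
      by (simp add: algebra_simps)
    finally show ?thesis .
  qed
  show ?case using Suc e by (simp add: distrib_left)
qed

lemma tele_cos:
  fixes a x :: real
  shows "2 * sin (x/2) * (\<Sum>i\<in>{1..K}. cos (a + real i * x)) = sin (a + (real K + 1/2) * x) - sin (a + x/2)"
proof (induction K)
  case 0 then show ?case by simp
next
  case (Suc K)
  have e: "2 * sin (x/2) * cos (a + real (Suc K) * x) = sin (a + (real (Suc K) + 1/2) * x) - sin (a + (real K + 1/2) * x)"
  proof -
    have "2 * sin (x/2) * cos (a + real (Suc K) * x) = sin (x/2 + (a + real (Suc K) * x)) + sin (x/2 - (a + real (Suc K) * x))"
      using sin_times_cos[of "x/2" "a + real (Suc K) * x"] by simp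
    also have "sin (x/2 - (a + real (Suc K) * x)) = - sin (a + (real K + 1/2) * x)"
      by (subst sin_minus[symmetric]) (simp add: algebra_simps)
    also have "x/2 + (a + real (Suc K) * x) = a + (real (Suc K) + 1/2) * x"
      by (simp add: algebra_simps)
    finally show ?thesis by simp
  qed
  show ?case using Suc e by (simp add: distrib_left)
qed



lemma mat2_eq_iff: "mat2 a b c d = mat2 a' b' c' d' \<longleftrightarrow> a = a' \<and> b = b' \<and> c = c' \<and> d = d'"
  by (auto simp: mat2_def vec_eq_iff forall_2)

lemma mat2_add: "mat2 a b c d + mat2 a' b' c' d' = mat2 (a+a') (b+b') (c+c') (d+d')"
  by (auto simp: mat2_def vec_eq_iff forall_2)

lemma mat2_scaleR: "t *\<^sub>R mat2 a b c d = mat2 (t *\<^sub>R a) (t *\<^sub>R b) (t *\<^sub>R c) (t *\<^sub>R d)"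
  by (auto simp: mat2_def vec_eq_iff forall_2)

lemma mat2_sum: "(\<Sum>i\<in>I. mat2 (a i) (b i) (c i) (d i)) = mat2 (\<Sum>i\<in>I. a i) (\<Sum>i\<in>I. b i) (\<Sum>i\<in>I. c i) (\<Sum>i\<in>I. d i)"
  by (auto simp: mat2_def vec_eq_iff forall_2)

lemma Pp_mat: "Pp r a (nx, nz) = mat2 (of_real ((1 + (if a then r else -r) * nz)/2)) (of_real ((if a then r else -r) * nx / 2))
   (of_real ((if a then r else -r) * nx / 2)) (of_real ((1 - (if a then r else -r) * nz)/2))"
  unfolding Pp_def dot_sigma_def Id2_def sigma_x_def sigma_y_def sigma_z_def
  apply (simp add: mat2_def vec_eq_iff forall_2)
  apply (simp add: scaleR_conv_of_real algebra_simps add_divide_distrib diff_divide_distrib)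
  done

lemma Pi_mat: "Pi_rot n i = mat2 (of_real ((1 + sin (2*pi*real i/real n)) / n)) (of_real (cos (2*pi*real i/real n) / n))
   (of_real (cos (2*pi*real i/real n) / n)) (of_real ((1 - sin (2*pi*real i/real n)) / n))"
  unfolding Pi_rot_def dot_sigma_def Id2_def sigma_x_def sigma_y_def sigma_z_def
  apply (simp add: mat2_def vec_eq_iff forall_2)
  apply (simp add: scaleR_conv_of_real algebra_simps add_divide_distrib diff_divide_distrib)
  done


abbreviation th :: "nat \<Rightarrow> nat \<Rightarrow> real" where "th n i \<equiv> 2*pi*real i/real n"

lemma sum_sin_zero: assumes "n \<ge> 2" shows "(\<Sum>i\<in>{1..n}. sin (th n i)) = 0"
proof -
  have np: "real n \<ge> 2" using assms by simp
  have s: "sin (pi / real n) > 0" using np by (intro sin_gt_zero) (auto simp: field_simps)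
  have "2 * sin ((2*pi/real n)/2) * (\<Sum>i\<in>{1..n}. sin (0 + real i * (2*pi/real n))) = cos (0 + (2*pi/real n)/2) - cos (0 + (real n + 1/2) * (2*pi/real n))"
    by (rule tele_sin)
  moreover have "(real n + 1/2) * (2*pi/real n) = pi / real n + 2*pi" using np by (simp add: field_simps)
  moreover have "(\<Sum>i\<in>{1..n}. sin (0 + real i * (2*pi/real n))) = (\<Sum>i\<in>{1..n}. sin (th n i))"
    by (simp add: mult.commute)
  ultimately show ?thesis using s by simp
qed

lemma sum_cos_zero: assumes "n \<ge> 2" shows "(\<Sum>i\<in>{1..n}. cos (th n i)) = 0"
proof -
  have np: "real n \<ge> 2" using assms by simp
  have s: "sin (pi / real n) > 0" using np by (intro sin_gt_zero) (auto simp: field_simps)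
  have "2 * sin ((2*pi/real n)/2) * (\<Sum>i\<in>{1..n}. cos (0 + real i * (2*pi/real n))) = sin (0 + (real n + 1/2) * (2*pi/real n)) - sin (0 + (2*pi/real n)/2)"
    by (rule tele_cos)
  moreover have "(real n + 1/2) * (2*pi/real n) = pi / real n + 2*pi" using np by (simp add: field_simps)
  moreover have "(\<Sum>i\<in>{1..n}. cos (0 + real i * (2*pi/real n))) = (\<Sum>i\<in>{1..n}. cos (th n i))"
    by (simp add: mult.commute)
  ultimately show ?thesis using s by simp
qed

lemma sum_Pi_mat: "(\<Sum>i\<in>I. q i *\<^sub>R Pi_rot n i) = mat2
   (of_real (\<Sum>i\<in>I. q i * ((1 + sin (th n i)) / n))) (of_real (\<Sum>i\<in>I. q i * (cos (th n i) / n)))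
   (of_real (\<Sum>i\<in>I. q i * (cos (th n i) / n))) (of_real (\<Sum>i\<in>I. q i * ((1 - sin (th n i)) / n)))"
  unfolding Pi_mat mat2_scaleR mat2_sum by (simp add: scaleR_conv_of_real)

lemma eq_iff: "Pp r a (nx, nz) = (\<Sum>i\<in>I. q i *\<^sub>R Pi_rot n i) \<longleftrightarrow>
   (1 + (if a then r else -r) * nz)/2 = (\<Sum>i\<in>I. q i * ((1 + sin (th n i)) / n)) \<and>
   (if a then r else -r) * nx / 2 = (\<Sum>i\<in>I. q i * (cos (th n i) / n)) \<and>
   (1 - (if a then r else -r) * nz)/2 = (\<Sum>i\<in>I. q i * ((1 - sin (th n i)) / n))"
  unfolding Pp_mat sum_Pi_mat mat2_eq_iff of_real_eq_iff by blast


lemma sum_h1: "(\<Sum>i\<in>I. q i * ((1 + f i) / (n::real))) = ((\<Sum>i\<in>I. q i) + (\<Sum>i\<in>I. q i * f i)) / n"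
  by (simp add: sum.distrib sum_divide_distrib[symmetric] algebra_simps)
lemma sum_h2: "(\<Sum>i\<in>I. q i * ((1 - f i) / (n::real))) = ((\<Sum>i\<in>I. q i) - (\<Sum>i\<in>I. q i * f i)) / n"
  by (simp add: sum_subtractf sum_divide_distrib[symmetric] algebra_simps)
lemma sum_h3: "(\<Sum>i\<in>I. q i * (f i / (n::real))) = (\<Sum>i\<in>I. q i * f i) / n"
  by (simp add: sum_divide_distrib[symmetric] algebra_simps)

definition good :: "nat \<Rightarrow> (nat \<Rightarrow> real) \<Rightarrow> real \<Rightarrow> real \<Rightarrow> bool" where
  "good n s a b \<longleftrightarrow> (\<forall>i\<in>{1..n}. \<bar>s i\<bar> \<le> 1) \<and> (\<Sum>i\<in>{1..n}. s i) = 0 \<and>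
     (\<Sum>i\<in>{1..n}. s i * cos (th n i)) = a \<and> (\<Sum>i\<in>{1..n}. s i * sin (th n i)) = b"

lemma sim_imp:
  assumes n: "n \<ge> 2" and sim: "simulates {1..n} (Pi_rot n) unit_xz UNIV (Pp r)" and x: "(nx, nz) \<in> unit_xz"
  shows "\<exists>s. good n s (real n * r * nx) (real n * r * nz)"
proof -
  obtain p :: "bool \<Rightarrow> real\<times>real \<Rightarrow> nat \<Rightarrow> real" where
    p0: "\<forall>x\<in>unit_xz. \<forall>a. \<forall>i\<in>{1..n}. p a x i \<ge> 0" and
    p1: "\<forall>x\<in>unit_xz. \<forall>i\<in>{1..n}. (\<Sum>a\<in>UNIV. p a x i) = 1" and
    pe: "\<forall>x\<in>unit_xz. \<forall>a. Pp r a x = (\<Sum>i\<in>{1..n}. p a x i *\<^sub>R Pi_rot n i)"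
    using sim unfolding simulates_def by blast
  define q where "q i = p True (nx, nz) i" for i
  have np: "real n > 0" using n by simp
  have e: "(1 + r * nz)/2 = ((\<Sum>i\<in>{1..n}. q i) + (\<Sum>i\<in>{1..n}. q i * sin (th n i))) / n"
          "r * nx / 2 = (\<Sum>i\<in>{1..n}. q i * cos (th n i)) / n"
          "(1 - r * nz)/2 = ((\<Sum>i\<in>{1..n}. q i) - (\<Sum>i\<in>{1..n}. q i * sin (th n i))) / n"
    using pe[rule_format, OF x, of True] np unfolding eq_iff sum_h1 sum_h2 sum_h3 q_def by (auto simp: field_simps)
  have sq: "(\<Sum>i\<in>{1..n}. q i) = n / 2" and ss: "(\<Sum>i\<in>{1..n}. q i * sin (th n i)) = n * r * nz / 2"
   and sc: "(\<Sum>i\<in>{1..n}. q i * cos (th n i)) = n * r * nx / 2"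
    using e np by (auto simp: field_simps)
  have qb: "0 \<le> q i \<and> q i \<le> 1" if "i \<in> {1..n}" for i
  proof -
    have "p False (nx,nz) i + p True (nx,nz) i = 1" using p1[rule_format, OF x that] by (simp add: UNIV_bool)
    moreover have "p False (nx,nz) i \<ge> 0" "p True (nx,nz) i \<ge> 0" using p0 x that by auto
    ultimately show ?thesis unfolding q_def by auto
  qed
  define s where "s i = 2 * q i - 1" for i
  have "good n s (real n * r * nx) (real n * r * nz)"
    unfolding good_def
  proof (intro conjI ballI)
    fix i assume "i \<in> {1..n}" then show "\<bar>s i\<bar> \<le> 1" using qb unfolding s_def by fastforce
  next
    show "(\<Sum>i\<in>{1..n}. s i) = 0" unfolding s_def using sq by (simp add: sum_subtractf sum_distrib_left[symmetric])
  next
    show "(\<Sum>i\<in>{1..n}. s i * cos (th n i)) = real n * r * nx"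
      unfolding s_def using sc sum_cos_zero[OF n]
      by (simp add: left_diff_distrib sum_subtractf sum_distrib_left[symmetric] mult.assoc)
  next
    show "(\<Sum>i\<in>{1..n}. s i * sin (th n i)) = real n * r * nz"
      unfolding s_def using ss sum_sin_zero[OF n]
      by (simp add: left_diff_distrib sum_subtractf sum_distrib_left[symmetric] mult.assoc)
  qed
  then show ?thesis by blast
qed

lemma imp_sim:
  assumes n: "n \<ge> 2" and ex: "\<And>nx nz. (nx, nz) \<in> unit_xz \<Longrightarrow> \<exists>s. good n s (real n * r * nx) (real n * r * nz)"
  shows "simulates {1..n} (Pi_rot n) unit_xz UNIV (Pp r)"
proof -
  define S where "S x = (SOME s. good n s (real n * r * fst x) (real n * r * snd x))" for x
  have S: "good n (S (nx,nz)) (real n * r * nx) (real n * r * nz)" if "(nx,nz) \<in> unit_xz" for nx nz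
    unfolding S_def using someI_ex[OF ex[OF that]] by simp
  define p where "p a x i = (1 + (if a then 1 else -1) * S x i) / 2" for a x i
  have np: "real n > 0" using n by simp
  show ?thesis unfolding simulates_def
  proof (intro exI[of _ p] conjI ballI allI)
    fix x a i assume x: "x \<in> unit_xz" and i: "i \<in> {1..n}"
    obtain nx nz where xx: "x = (nx,nz)" by fastforce
    have "\<bar>S x i\<bar> \<le> 1" using S[of nx nz] x i unfolding xx good_def by auto
    then show "p a x i \<ge> 0" unfolding p_def by auto
  next
    fix x i show "(\<Sum>a\<in>UNIV. p a x i) = 1" unfolding p_def by (simp add: UNIV_bool add_divide_distrib[symmetric])
  next
    fix x a assume x: "x \<in> unit_xz"
    obtain nx nz where xx: "x = (nx,nz)" by fastforce
    have g: "good n (S x) (real n * r * nx) (real n * r * nz)" using S x xx by simp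
    define c :: real where "c = (if a then 1 else -1)"
    have p': "p a x i = (1 + c * S x i) / 2" for i unfolding p_def c_def by simp
    have r1: "(\<Sum>i\<in>{1..n}. p a x i) = n/2" using g unfolding p' good_def
      by (simp add: sum.distrib sum_divide_distrib[symmetric] sum_distrib_left[symmetric])
    have r2: "(\<Sum>i\<in>{1..n}. p a x i * sin (th n i)) = c * (n * r * nz) / 2" using g sum_sin_zero[OF n] unfolding p' good_def
      by (simp add: sum.distrib sum_divide_distrib[symmetric] sum_distrib_left[symmetric] algebra_simps)
    have r3: "(\<Sum>i\<in>{1..n}. p a x i * cos (th n i)) = c * (n * r * nx) / 2" using g sum_cos_zero[OF n] unfolding p' good_def
      by (simp add: sum.distrib sum_divide_distrib[symmetric] sum_distrib_left[symmetric] algebra_simps)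
    show "Pp r a x = (\<Sum>i\<in>{1..n}. p a x i *\<^sub>R Pi_rot n i)"
      unfolding xx eq_iff sum_h1 sum_h2 sum_h3 unfolding xx[symmetric] r1 r2 r3
      using np unfolding c_def by (auto simp: field_simps)
  qed
qed




lemma odd_sum_val:
  fixes y :: real
  assumes M: "M \<ge> 1" and n: "n = 2*M+1" and ypi: "y * (2 * real n) = pi" and y0: "y > 0"
     and sy: "sin y > 0"
  shows "2 * (\<Sum>i\<in>{1..M}. sin (y + real i * (4*y))) - (\<Sum>i\<in>{1..2*M}. sin (y + real i * (4*y))) = cos y ^ 2 / sin y"
proof -
    have t1: "2 * sin ((4*y)/2) * (\<Sum>i\<in>{1..M}. sin (y + real i * (4*y))) = cos (y + (4*y)/2) - cos (y + (real M + 1/2) * (4*y))"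
      by (rule tele_sin)
    have t2: "2 * sin ((4*y)/2) * (\<Sum>i\<in>{1..2*M}. sin (y + real i * (4*y))) = cos (y + (4*y)/2) - cos (y + (real (2*M) + 1/2) * (4*y))"
      by (rule tele_sin)
    have rn: "real n = 2 * real M + 1" using n by simp
    have e1: "y + (real M + 1/2) * (4*y) = y + pi" using ypi unfolding rn by (simp add: algebra_simps)
    have e2: "y + (real (2*M) + 1/2) * (4*y) = 2*pi - y" using ypi unfolding rn by (simp add: algebra_simps)
    have e3: "y + (4*y)/2 = 3*y" "(4*y)/2 = 2*y" by simp_all
    have cos2: "cos (2*pi - y) = cos y" by (simp add: cos_diff)
    have cos3: "cos (3*y) = 4 * cos y ^ 3 - 3 * cos y" by (rule cos_treble_cos)
    have s2: "sin (2*y) = 2 * sin y * cos y" by (simp add: sin_double)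
    have cy: "cos y > 0"
    proof (rule cos_gt_zero)
      show "0 < y" by fact
      have "real n \<ge> 3" using n M by simp
      then have "y * (2 * 3) \<le> y * (2 * real n)" using y0 by (intro mult_left_mono) auto
      then show "y < pi / 2" using ypi y0 by linarith
    qed
    define S1 where "S1 = (\<Sum>i\<in>{1..M}. sin (y + real i * (4*y)))"
    define S2 where "S2 = (\<Sum>i\<in>{1..2*M}. sin (y + real i * (4*y)))"
    have A1: "2 * (2 * sin y * cos y) * S1 = 4 * cos y ^ 3 - 3 * cos y + cos y"
      using t1 unfolding S1_def[symmetric] e1 e3 s2 by (simp add: cos3)
    have A2: "2 * (2 * sin y * cos y) * S2 = 4 * cos y ^ 3 - 3 * cos y - cos y"
      using t2 unfolding S2_def[symmetric] e2 e3 s2 cos2 by (simp add: cos3)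
    have A: "2 * (2 * sin y * cos y) * (2 * S1 - S2) = 4 * cos y ^ 3"
      using A1 A2 by (simp add: algebra_simps)
    have "(4*cos y) * (sin y * (2*S1-S2)) = (4*cos y) * cos y^2" using A
      by (simp add: algebra_simps power2_eq_square power3_eq_cube)
    then have B: "sin y * (2*S1-S2) = cos y^2" using cy by simp
    show ?thesis unfolding S1_def[symmetric] S2_def[symmetric] using B sy
      by (simp add: field_simps)
qed

lemma split_val:
  fixes c :: "nat \<Rightarrow> real"
  shows "(\<Sum>i\<in>{1..2*M+1}. (if i \<le> M then c i - t else if i \<le> 2*M then t - c i else 0))
     = 2 * (\<Sum>i\<in>{1..M}. c i) - (\<Sum>i\<in>{1..2*M}. c i)"
proof -
  define f where "f i = (if i \<le> M then c i - t else if i \<le> 2*M then t - c i else 0)" for i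
  have S: "{1..2*M+1} = {1..Suc (M+M)}" "{1..2*M} = {1..M+M}" by auto
  have a1: "(\<Sum>i\<in>{1..2*M+1}. f i) = (\<Sum>i\<in>{1..M+M}. f i) + f (Suc (M+M))" unfolding S by simp
  have a2: "f (Suc (M+M)) = 0" unfolding f_def by simp
  have a3: "(\<Sum>i\<in>{1..M+M}. f i) = (\<Sum>i\<in>{1..M}. f i) + (\<Sum>i\<in>{M+1..M+M}. f i)"
    by (rule sum.ub_add_nat) simp
  have a4: "(\<Sum>i\<in>{1..M}. f i) = (\<Sum>i\<in>{1..M}. c i) - real M * t"
    by (simp add: f_def sum_subtractf)
  have a5: "(\<Sum>i\<in>{M+1..M+M}. f i) = real M * t - (\<Sum>i\<in>{M+1..M+M}. c i)"
  proof -
    have "(\<Sum>i\<in>{M+1..M+M}. f i) = (\<Sum>i\<in>{M+1..M+M}. t - c i)"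
      by (rule sum.cong) (auto simp: f_def)
    then show ?thesis by (simp add: sum_subtractf)
  qed
  have a6: "(\<Sum>i\<in>{1..M+M}. c i) = (\<Sum>i\<in>{1..M}. c i) + (\<Sum>i\<in>{M+1..M+M}. c i)"
    by (rule sum.ub_add_nat) simp
  show ?thesis unfolding f_def[symmetric] a1 a2 a3 a4 a5 S(2) a6 by simp
qed


lemma sin_ge_sin: "0 \<le> y \<Longrightarrow> y \<le> b \<Longrightarrow> b \<le> pi - y \<Longrightarrow> sin y \<le> sin b"
proof (cases "b \<le> pi/2")
  case True
  assume "0 \<le> y" "y \<le> b"
  then show ?thesis using True by (intro sin_monotone_2pi_le) auto
next
  case False
  assume "0 \<le> y" "y \<le> b" "b \<le> pi - y"
  then have "sin y \<le> sin (pi - b)" using False by (intro sin_monotone_2pi_le) auto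
  then show ?thesis by simp
qed

lemma upper_odd:
  assumes M: "M \<ge> 1" and n: "n = 2*M+1" and g: "good n s a b"
    and ab: "sin (pi/(2*real n)) * a + cos (pi/(2*real n)) * b = z"
  shows "z \<le> cos (pi/(2*real n))^2 / sin (pi/(2*real n))"
proof -
  define y where "y = pi / (2 * real n)"
  have np: "real n \<ge> 3" using M n by simp
  have y0: "y > 0" and ypi: "y * (2 * real n) = pi" using np by (auto simp: y_def)
  have sy: "sin y > 0" using np by (intro sin_gt_zero) (auto simp: y_def field_simps)
  define c where "c i = sin (y + real i * (4*y))" for i :: nat
  have thc: "th n i + y = y + real i * (4*y)" for i unfolding y_def using np by (simp add: field_simps)
  have zc: "z = (\<Sum>i\<in>{1..n}. s i * c i)"
  proof -
    have A: "(\<Sum>i\<in>{1..n}. s i * cos (th n i)) = a" "(\<Sum>i\<in>{1..n}. s i * sin (th n i)) = b"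
      using g unfolding good_def by auto
    have B: "(\<Sum>i\<in>{1..n}. s i * (sin y * cos (th n i) + cos y * sin (th n i))) =
       sin y * (\<Sum>i\<in>{1..n}. s i * cos (th n i)) + cos y * (\<Sum>i\<in>{1..n}. s i * sin (th n i))"
      by (simp add: distrib_left sum.distrib sum_distrib_left mult.left_commute)
    have "z = (\<Sum>i\<in>{1..n}. s i * (sin y * cos (th n i) + cos y * sin (th n i)))"
      unfolding B A using ab unfolding y_def by simp
    also have "\<dots> = (\<Sum>i\<in>{1..n}. s i * c i)"
      unfolding c_def thc[symmetric] by (simp add: sin_add algebra_simps)
    finally show ?thesis .
  qed
  have s0: "(\<Sum>i\<in>{1..n}. s i) = 0" using g unfolding good_def by simp
  define t where "t = sin y"
  have "z = (\<Sum>i\<in>{1..n}. s i * (c i - t))"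
    unfolding zc using s0 by (simp add: right_diff_distrib sum_subtractf sum_distrib_right[symmetric])
  also have "\<dots> \<le> (\<Sum>i\<in>{1..n}. (if i \<le> M then c i - t else if i \<le> 2*M then t - c i else 0))"
  proof (rule sum_mono)
    fix i assume i: "i \<in> {1..n}"
    then have si: "\<bar>s i\<bar> \<le> 1" using g unfolding good_def by auto
    have ci: "c i = sin ((4 * real i + 1) * y)" unfolding c_def by (simp add: algebra_simps)
    show "s i * (c i - t) \<le> (if i \<le> M then c i - t else if i \<le> 2*M then t - c i else 0)"
    proof (cases "i \<le> M")
      case True
      have "t \<le> c i" unfolding ci t_def
      proof (rule sin_ge_sin)
        show "0 \<le> y" using y0 by simp
        show "y \<le> (4 * real i + 1) * y" using y0 by simp
        have "real (4*i+1) \<le> real (2*n - 1)" using True n by simp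
        then have "(4 * real i + 1) \<le> 2 * real n - 1" using np by simp
        then have "(4 * real i + 1) * y \<le> (2 * real n - 1) * y" using y0 by (intro mult_right_mono) auto
        then show "(4 * real i + 1) * y \<le> pi - y" using ypi by (simp add: algebra_simps)
      qed
      then have "s i * (c i - t) \<le> c i - t" using si
        by (metis abs_ge_self abs_mult abs_of_nonneg diff_ge_0_iff_ge mult_left_le_one_le order.trans abs_ge_zero)
      then show ?thesis using True by simp
    next
      case False
      show ?thesis
      proof (cases "i \<le> 2*M")
        case True
        have "c i \<le> 0" unfolding ci
        proof (rule sin_le_zero)
          have "real (4*M+4) \<le> real (4*i)" "real (4*i) \<le> real (8*M)" using False True by auto
          then have a1: "2 * real n + 2 \<le> 4 * real i" and a2: "4 * real i \<le> 4 * real n - 4" using n by auto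
          have "(2 * real n) * y \<le> (4 * real i + 1) * y" using a1 y0 by (intro mult_right_mono) auto
          then show "pi \<le> (4 * real i + 1) * y" using ypi by (simp add: algebra_simps)
          have "(4 * real i + 1) * y < (4 * real n) * y" using a2 y0 by (intro mult_strict_right_mono) auto
          then show "(4 * real i + 1) * y < 2 * pi" using ypi by (simp add: algebra_simps)
        qed
        then have "t - c i \<ge> 0" using sy t_def by simp
        then have "s i * (c i - t) \<le> t - c i" using si
          by (metis abs_ge_self abs_mult abs_of_nonneg abs_minus_commute mult_left_le_one_le order.trans abs_ge_zero)
        then show ?thesis using True False by simp
      next
        case False2: False
        then have "i = n" using i n \<open>\<not> i \<le> M\<close> by auto
        have "real n * (4*y) = 2 * (y * (2 * real n))" by simp
        then have e4: "real n * (4*y) = 2 * pi" using ypi by simp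
        have e5: "y + real n * (4*y) = y + 2 * pi" using e4 by linarith
        have "c n = sin (y + 2 * pi)" using c_def[of n] e5 by metis
        then have "c i = sin (y + 2 * pi)" using \<open>i = n\<close> by simp
        then have "c i = t" unfolding t_def by simp
        then show ?thesis using False False2 by simp
      qed
    qed
  qed
  also have "(\<Sum>i\<in>{1..n}. (if i \<le> M then c i - t else if i \<le> 2*M then t - c i else 0))
     = 2 * (\<Sum>i\<in>{1..M}. c i) - (\<Sum>i\<in>{1..2*M}. c i)"
    unfolding n by (rule split_val)
  also have "\<dots> = cos y ^ 2 / sin y"
    unfolding c_def by (rule odd_sum_val[OF M n ypi y0 sy])
  finally show ?thesis unfolding y_def .
qed




definition Wset :: "nat \<Rightarrow> complex set" where
  "Wset n = {Complex a b | a b. \<exists>s. good n s a b}"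

lemma Wset_convex: "convex (Wset n)"
proof (rule convexI)
  fix x y :: complex and u v :: real
  assume x: "x \<in> Wset n" and y: "y \<in> Wset n" and u: "0 \<le> u" and v: "0 \<le> v" and uv: "u + v = 1"
  obtain s1 where g1: "good n s1 (Re x) (Im x)" using x unfolding Wset_def by auto
  obtain s2 where g2: "good n s2 (Re y) (Im y)" using y unfolding Wset_def by auto
  define s where "s i = u * s1 i + v * s2 i" for i
  have "good n s (u * Re x + v * Re y) (u * Im x + v * Im y)"
    unfolding good_def
  proof (intro conjI ballI)
    fix i assume i: "i \<in> {1..n}"
    have "\<bar>s i\<bar> \<le> u * \<bar>s1 i\<bar> + v * \<bar>s2 i\<bar>" unfolding s_def using u v
      by (metis abs_mult abs_of_nonneg abs_triangle_ineq)
    also have "\<dots> \<le> u * 1 + v * 1" using g1 g2 i u v unfolding good_def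
      by (intro add_mono mult_left_mono) auto
    finally show "\<bar>s i\<bar> \<le> 1" using uv by simp
  next
    show "(\<Sum>i\<in>{1..n}. s i) = 0" using g1 g2 unfolding good_def s_def
      by (simp add: sum.distrib sum_distrib_left[symmetric])
  next
    show "(\<Sum>i\<in>{1..n}. s i * cos (th n i)) = u * Re x + v * Re y" using g1 g2 unfolding good_def s_def
      by (simp add: sum.distrib sum_distrib_left[symmetric] distrib_right mult.assoc)
  next
    show "(\<Sum>i\<in>{1..n}. s i * sin (th n i)) = u * Im x + v * Im y" using g1 g2 unfolding good_def s_def
      by (simp add: sum.distrib sum_distrib_left[symmetric] distrib_right mult.assoc)
  qed
  moreover have "u *\<^sub>R x + v *\<^sub>R y = Complex (u * Re x + v * Re y) (u * Im x + v * Im y)"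
    by (simp add: complex_eq_iff)
  ultimately show "u *\<^sub>R x + v *\<^sub>R y \<in> Wset n" unfolding Wset_def by blast
qed

lemma Wset_neg: assumes "x \<in> Wset n" shows "- x \<in> Wset n"
proof -
  obtain s where g: "good n s (Re x) (Im x)" using assms unfolding Wset_def by auto
  have "good n (\<lambda>i. - s i) (- Re x) (- Im x)" using g unfolding good_def
    by (simp add: sum_negf)
  moreover have "- x = Complex (- Re x) (- Im x)" by (simp add: complex_eq_iff)
  ultimately show ?thesis unfolding Wset_def by blast
qed

lemma shift_sum:
  fixes s f :: "nat \<Rightarrow> real"
  assumes n: "n \<ge> 1" and f: "f (n+1) = f 1"
  shows "(\<Sum>i\<in>{1..n}. (if i = 1 then s n else s (i - 1)) * f i) = (\<Sum>j\<in>{1..n}. s j * f (j+1))"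
proof -
  obtain k where k: "n = Suc k" using n by (cases n) auto
  define g where "g i = (if i = 1 then s n else s (i - 1)) * f i" for i
  have "(\<Sum>i\<in>{1..Suc k}. g i) = g 1 + (\<Sum>i\<in>{Suc 1..Suc k}. g i)"
    by (rule sum.atLeast_Suc_atMost) simp
  also have "(\<Sum>i\<in>{Suc 1..Suc k}. g i) = (\<Sum>i\<in>{1..k}. g (Suc i))"
    by (rule sum.shift_bounds_cl_Suc_ivl)
  also have "(\<Sum>i\<in>{1..k}. g (Suc i)) = (\<Sum>j\<in>{1..k}. s j * f (j+1))"
    by (rule sum.cong) (auto simp: g_def)
  also have "g 1 = s n * f (n+1)" unfolding g_def using f by simp
  finally have "(\<Sum>i\<in>{1..n}. g i) = (\<Sum>j\<in>{1..k}. s j * f (j+1)) + s n * f (n+1)" unfolding k by simp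
  also have "\<dots> = (\<Sum>j\<in>{1..n}. s j * f (j+1))" unfolding k by simp
  finally show ?thesis unfolding g_def .
qed

lemma Wset_rot: assumes n: "n \<ge> 2" and x: "x \<in> Wset n" shows "cis (2*pi/real n) * x \<in> Wset n"
proof -
  define al where "al = 2*pi/real n"
  obtain s where g: "good n s (Re x) (Im x)" using x unfolding Wset_def by auto
  define s' where "s' i = (if i = 1 then s n else s (i - 1))" for i
  have np: "real n > 0" using n by simp
  have thS: "th n (j+1) = th n j + al" for j unfolding al_def using np by (simp add: field_simps)
  have th1: "th n (n+1) = th n 1 + 2*pi" using np by (simp add: field_simps)
  have sc: "(\<Sum>i\<in>{1..n}. s' i * cos (th n i)) = (\<Sum>j\<in>{1..n}. s j * cos (th n (j+1)))"
    unfolding s'_def by (rule shift_sum) (use n th1 in auto)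
  have ss: "(\<Sum>i\<in>{1..n}. s' i * sin (th n i)) = (\<Sum>j\<in>{1..n}. s j * sin (th n (j+1)))"
    unfolding s'_def by (rule shift_sum) (use n th1 in auto)
  have s1: "(\<Sum>i\<in>{1..n}. s' i) = (\<Sum>j\<in>{1..n}. s j)"
    using shift_sum[of n "\<lambda>_. 1" s] n unfolding s'_def by simp
  have "good n s' (cos al * Re x - sin al * Im x) (sin al * Re x + cos al * Im x)"
    unfolding good_def
  proof (intro conjI ballI)
    fix i assume "i \<in> {1..n}"
    moreover have b: "\<And>j. j \<in> {1..n} \<Longrightarrow> \<bar>s j\<bar> \<le> 1" using g unfolding good_def by auto
    ultimately show "\<bar>s' i\<bar> \<le> 1" using n unfolding s'_def by (cases "i = 1") (auto intro!: b)
  next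
    show "(\<Sum>i\<in>{1..n}. s' i) = 0" using s1 g unfolding good_def by simp
  next
    have "(\<Sum>j\<in>{1..n}. s j * cos (th n (j+1))) = cos al * (\<Sum>j\<in>{1..n}. s j * cos (th n j)) - sin al * (\<Sum>j\<in>{1..n}. s j * sin (th n j))"
      unfolding thS cos_add by (simp add: sum_distrib_left sum_subtractf algebra_simps)
    then show "(\<Sum>i\<in>{1..n}. s' i * cos (th n i)) = cos al * Re x - sin al * Im x"
      using sc g unfolding good_def by simp
  next
    have "(\<Sum>j\<in>{1..n}. s j * sin (th n (j+1))) = sin al * (\<Sum>j\<in>{1..n}. s j * cos (th n j)) + cos al * (\<Sum>j\<in>{1..n}. s j * sin (th n j))"
      unfolding thS sin_add by (simp add: sum_distrib_left sum.distrib algebra_simps)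
    then show "(\<Sum>i\<in>{1..n}. s' i * sin (th n i)) = sin al * Re x + cos al * Im x"
      using ss g unfolding good_def by simp
  qed
  moreover have "cis al * x = Complex (cos al * Re x - sin al * Im x) (sin al * Re x + cos al * Im x)"
    by (simp add: complex_eq_iff)
  ultimately show ?thesis unfolding Wset_def al_def by blast
qed




lemma lin_solve: assumes "(a::real) > 0" "c * a * x = d * a" "c \<noteq> 0" shows "x = d / c"
proof -
  have "(c * x) * a = d * a" using assms(2) by (simp add: algebra_simps)
  then have "c * x = d" using assms(1) by simp
  then show ?thesis using assms(3) by (simp add: field_simps)
qed

lemma sum_pm:
  fixes f :: "nat \<Rightarrow> real"
  assumes "K \<le> n"
  shows "(\<Sum>i\<in>{1..n}. (if i \<le> K then 1 else -1) * f i) = 2 * (\<Sum>i\<in>{1..K}. f i) - (\<Sum>i\<in>{1..n}. f i)"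
proof -
  obtain p where p: "n = K + p" using assms le_Suc_ex by blast
  define g where "g i = (if i \<le> K then 1 else -1) * f i" for i
  have a1: "(\<Sum>i\<in>{1..K+p}. g i) = (\<Sum>i\<in>{1..K}. g i) + (\<Sum>i\<in>{K+1..K+p}. g i)"
    by (rule sum.ub_add_nat) simp
  have a2: "(\<Sum>i\<in>{1..K+p}. f i) = (\<Sum>i\<in>{1..K}. f i) + (\<Sum>i\<in>{K+1..K+p}. f i)"
    by (rule sum.ub_add_nat) simp
  have a3: "(\<Sum>i\<in>{1..K}. g i) = (\<Sum>i\<in>{1..K}. f i)" by (rule sum.cong) (auto simp: g_def)
  have a4: "(\<Sum>i\<in>{K+1..K+p}. g i) = (\<Sum>i\<in>{K+1..K+p}. - f i)" by (rule sum.cong) (auto simp: g_def)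
  show ?thesis unfolding g_def[symmetric] p a1 a2 a3 a4 by (simp add: sum_negf)
qed

lemma sum_pm0:
  fixes f :: "nat \<Rightarrow> real"
  shows "(\<Sum>i\<in>{1..2*M+1}. (if i \<le> M then 1 else if i \<le> 2*M then -1 else 0) * f i) = 2 * (\<Sum>i\<in>{1..M}. f i) - (\<Sum>i\<in>{1..2*M}. f i)"
proof -
  have "(\<Sum>i\<in>{1..2*M+1}. (if i \<le> M then 1 else if i \<le> 2*M then -1 else 0) * f i) =
     (\<Sum>i\<in>{1..2*M+1}. (if i \<le> M then f i - 0 else if i \<le> 2*M then 0 - f i else 0))"
    by (rule sum.cong) auto
  then show ?thesis using split_val[of M f 0] by simp
qed

lemma V0_even:
  assumes m: "m \<ge> 1" and n: "n = 2*m"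
  shows "complex_of_real (2 / sin (pi / real n)) * cis (pi/2 + pi / real n) \<in> Wset n"
proof -
  have np: "real n \<ge> 2" using m n by simp
  have rn: "real n = 2 * real m" using n by simp
  define s where "s i = (if i \<le> m then 1 else -1::real)" for i
  have mn: "m \<le> n" using n by simp
  have sp: "sin (pi / real n) > 0" using np by (intro sin_gt_zero) (auto simp: field_simps)
  have thq: "th n i = 0 + real i * (pi / real m)" for i unfolding rn using m by (simp add: field_simps)
  have hx: "(pi / real m) / 2 = pi / real n" unfolding rn by simp
  have C: "(\<Sum>i\<in>{1..m}. cos (th n i)) = -1"
  proof -
    have t: "2 * sin ((pi / real m)/2) * (\<Sum>i\<in>{1..m}. cos (0 + real i * (pi / real m))) = sin (0 + (real m + 1/2) * (pi / real m)) - sin (0 + (pi / real m)/2)"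
      by (rule tele_cos)
    have "(real m + 1/2) * (pi / real m) = pi + pi / real n" using m unfolding rn by (simp add: field_simps)
    then have "2 * sin (pi / real n) * (\<Sum>i\<in>{1..m}. cos (th n i)) = - 2 * sin (pi / real n)"
      using t unfolding hx thq[symmetric] by simp
    note h = this
    show ?thesis using lin_solve[OF sp h] by simp
  qed
  have S: "(\<Sum>i\<in>{1..m}. sin (th n i)) = cot (pi / real n)"
  proof -
    have t: "2 * sin ((pi / real m)/2) * (\<Sum>i\<in>{1..m}. sin (0 + real i * (pi / real m))) = cos (0 + (pi/real m)/2) - cos (0 + (real m + 1/2) * (pi / real m))"
      by (rule tele_sin)
    have "(real m + 1/2) * (pi / real m) = pi + pi / real n" using m unfolding rn by (simp add: field_simps)
    then have "2 * sin (pi / real n) * (\<Sum>i\<in>{1..m}. sin (th n i)) = 2 * cos (pi / real n)"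
      using t unfolding hx thq[symmetric] by simp
    then show ?thesis using sp by (simp add: cot_def field_simps)
  qed
  have n2: "n \<ge> 2" using np by simp
  have "good n s (-2) (2 * cot (pi / real n))"
    unfolding good_def
  proof (intro conjI ballI)
    fix i show "\<bar>s i\<bar> \<le> 1" unfolding s_def by simp
  next
    show "(\<Sum>i\<in>{1..n}. s i) = 0" using sum_pm[OF mn, of "\<lambda>_. 1"] unfolding s_def using n by simp
  next
    show "(\<Sum>i\<in>{1..n}. s i * cos (th n i)) = -2" using sum_pm[OF mn, of "\<lambda>i. cos (th n i)"] C sum_cos_zero[OF n2]
      unfolding s_def by simp
  next
    show "(\<Sum>i\<in>{1..n}. s i * sin (th n i)) = 2 * cot (pi / real n)" using sum_pm[OF mn, of "\<lambda>i. sin (th n i)"] S sum_sin_zero[OF n2]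
      unfolding s_def by simp
  qed
  moreover have "complex_of_real (2 / sin (pi / real n)) * cis (pi/2 + pi / real n) = Complex (-2) (2 * cot (pi / real n))"
    using sp by (simp add: complex_eq_iff cos_add sin_add cot_def)
  ultimately show ?thesis unfolding Wset_def by auto
qed

lemma V0_odd:
  assumes M: "M \<ge> 1" and n: "n = 2*M+1"
  shows "complex_of_real (cot (pi / (2 * real n))) * cis (pi/2) \<in> Wset n"
proof -
  have np: "real n \<ge> 3" using M n by simp
  have rn: "real n = 2 * real M + 1" using n by simp
  define s where "s i = (if i \<le> M then 1 else if i \<le> 2*M then -1 else 0::real)" for i
  have sp: "sin (pi / real n) > 0" using np by (intro sin_gt_zero) (auto simp: field_simps)
  have thq: "th n i = 0 + real i * (2 * pi / real n)" for i by (simp add: field_simps)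
  have hx: "(2 * pi / real n) / 2 = pi / real n" by simp
  have e: "(real M + 1/2) * (2 * pi / real n) = pi" using np unfolding rn by (simp add: field_simps)
  have C: "(\<Sum>i\<in>{1..M}. cos (th n i)) = -1/2"
  proof -
    have t: "2 * sin ((2 * pi / real n)/2) * (\<Sum>i\<in>{1..M}. cos (0 + real i * (2 * pi / real n))) = sin (0 + (real M + 1/2) * (2 * pi / real n)) - sin (0 + (2 * pi / real n)/2)"
      by (rule tele_cos)
    then have "2 * sin (pi / real n) * (\<Sum>i\<in>{1..M}. cos (th n i)) = (-1) * sin (pi / real n)"
      unfolding hx thq[symmetric] e by simp
    note h = this
    show ?thesis using lin_solve[OF sp h] by simp
  qed
  have S: "(\<Sum>i\<in>{1..M}. sin (th n i)) = (1 + cos (pi / real n)) / (2 * sin (pi / real n))"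
  proof -
    have t: "2 * sin ((2 * pi / real n)/2) * (\<Sum>i\<in>{1..M}. sin (0 + real i * (2 * pi / real n))) = cos (0 + (2 * pi / real n)/2) - cos (0 + (real M + 1/2) * (2 * pi / real n))"
      by (rule tele_sin)
    then have "2 * sin (pi / real n) * (\<Sum>i\<in>{1..M}. sin (th n i)) = cos (pi / real n) + 1"
      unfolding hx thq[symmetric] e by simp
    then show ?thesis using sp by (simp add: field_simps)
  qed
  have n2: "n \<ge> 2" using np by simp
  have Sn: "n = Suc (2*M)" using n by simp
  have thn: "th n n = 2 * pi" using np by simp
  have C2: "(\<Sum>i\<in>{1..2*M}. cos (th n i)) = -1"
    using sum_cos_zero[OF n2] unfolding Sn using thn Sn by simp
  have S2: "(\<Sum>i\<in>{1..2*M}. sin (th n i)) = 0"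
    using sum_sin_zero[OF n2] unfolding Sn using thn Sn by simp
  have cot: "(1 + cos (pi / real n)) / sin (pi / real n) = cot (pi / (2 * real n))"
  proof -
    define z where "z = pi / (2 * real n)"
    have z2: "pi / real n = 2 * z" unfolding z_def by simp
    have cz: "cos z > 0" unfolding z_def using np by (intro cos_gt_zero) (auto simp: field_simps)
    have sz: "sin z > 0" unfolding z_def using np by (intro sin_gt_zero) (auto simp: field_simps)
    have "(1 + cos (2*z)) / sin (2*z) = (2 * cos z * cos z) / (2 * sin z * cos z)"
      unfolding cos_double_cos sin_double by (simp add: power2_eq_square)
    also have "\<dots> = cos z / sin z" using cz by simp
    finally show ?thesis unfolding z2 z_def[symmetric] cot_def .
  qed
  have "good n s 0 (cot (pi / (2 * real n)))"
    unfolding good_def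
  proof (intro conjI ballI)
    fix i show "\<bar>s i\<bar> \<le> 1" unfolding s_def by simp
  next
    show "(\<Sum>i\<in>{1..n}. s i) = 0" using sum_pm0[of M "\<lambda>_. 1"] unfolding s_def n by simp
  next
    show "(\<Sum>i\<in>{1..n}. s i * cos (th n i)) = 0" using sum_pm0[of M "\<lambda>i. cos (th n i)"] C C2
      unfolding s_def n[symmetric] by simp
  next
    show "(\<Sum>i\<in>{1..n}. s i * sin (th n i)) = cot (pi / (2 * real n))" using sum_pm0[of M "\<lambda>i. sin (th n i)"] S S2 cot sp
      unfolding s_def n[symmetric] by (simp add: field_simps)
  qed
  moreover have "complex_of_real (cot (pi / (2 * real n))) * cis (pi/2) = Complex 0 (cot (pi / (2 * real n)))"
    by (simp add: complex_eq_iff)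
  ultimately show ?thesis unfolding Wset_def by auto
qed





lemma near_angle:
  fixes psi phi alpha :: real
  assumes a0: "0 < alpha" and api: "alpha \<le> pi" and N: "real N * alpha = 2*pi" and N0: "N > 0"
  shows "\<exists>k<N. cos (psi + real k * alpha - phi) \<ge> cos (alpha/2)"
proof -
  define t where "t = (phi - psi) / alpha"
  define k1 where "k1 = \<lfloor>t + 1/2\<rfloor>"
  have k1a: "real_of_int k1 \<le> t + 1/2" "t + 1/2 < real_of_int k1 + 1" unfolding k1_def by linarith+
  define d where "d = psi + real_of_int k1 * alpha - phi"
  have "d = alpha * (real_of_int k1 - t)" unfolding d_def t_def using a0 by (simp add: field_simps)
  then have dabs: "\<bar>d\<bar> \<le> alpha / 2"
  proof -
    assume dd: "d = alpha * (real_of_int k1 - t)"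
    have "\<bar>real_of_int k1 - t\<bar> \<le> 1/2" using k1a by linarith
    then have "alpha * \<bar>real_of_int k1 - t\<bar> \<le> alpha * (1/2)" using a0 by (intro mult_left_mono) auto
    then show ?thesis unfolding dd abs_mult using a0 by simp
  qed
  define k where "k = nat (k1 mod int N)"
  have kN: "k < N" unfolding k_def using N0 by (simp add: nat_less_iff)
  have kk: "real k = real_of_int k1 - real N * real_of_int (k1 div int N)"
  proof -
    have "k1 mod int N \<ge> 0" using N0 by simp
    then have "real k = real_of_int (k1 mod int N)" unfolding k_def by simp
    also have "k1 mod int N = k1 - int N * (k1 div int N)" by (simp add: minus_div_mult_eq_mod[symmetric] algebra_simps)
    finally show ?thesis by simp
  qed
  have "psi + real k * alpha - phi = d - (2*pi) * real_of_int (k1 div int N)"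
    unfolding kk d_def using N by (simp add: algebra_simps)
  then have "cos (psi + real k * alpha - phi) = cos d"
    by (simp add: cos_diff)
  also have "cos d = cos \<bar>d\<bar>" by simp
  also have "cos \<bar>d\<bar> \<ge> cos (alpha/2)" using dabs api a0 by (subst cos_mono_le_eq) auto
  finally show ?thesis using kN by blast
qed

lemma inner_cis: "inner a (complex_of_real r * cis ang) = r * cmod a * cos (ang - Arg a)"
proof -
  have "a = rcis (cmod a) (Arg a)" by (rule rcis_cmod_Arg[symmetric])
  then have "Re a = cmod a * cos (Arg a)" "Im a = cmod a * sin (Arg a)"
    by (metis Re_rcis, metis Im_rcis)
  then show ?thesis unfolding inner_complex_def by (simp add: cos_diff algebra_simps)
qed

lemma disk:
  fixes W :: "complex set"
  assumes cW: "convex W" and rot: "\<And>x. x \<in> W \<Longrightarrow> cis alpha * x \<in> W"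
    and v0: "complex_of_real rho * cis psi \<in> W" and r0: "0 \<le> rho"
    and a0: "0 < alpha" and api: "alpha \<le> pi" and N: "real N * alpha = 2*pi" and N0: "N > 0"
    and u: "norm u = 1"
  shows "complex_of_real (rho * cos (alpha/2)) * u \<in> W"
proof (rule ccontr)
  define w where "w = complex_of_real (rho * cos (alpha/2)) * u"
  assume wW: "w \<notin> W"
  define V where "V k = complex_of_real rho * cis (psi + real k * alpha)" for k :: nat
  have VW: "V k \<in> W" for k
  proof (induction k)
    case 0 then show ?case using v0 by (simp add: V_def)
  next
    case (Suc k)
    have "V (Suc k) = cis alpha * V k" unfolding V_def by (simp add: cis_mult algebra_simps)
    then show ?case using rot Suc by simp
  qed
  define C where "C = convex hull (V ` {..<N})"
  have CW: "C \<subseteq> W" unfolding C_def using VW cW by (intro hull_minimal) auto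
  have wC: "w \<notin> C" using wW CW by auto
  have "convex C" "closed C" unfolding C_def
    by (auto intro: compact_imp_closed finite_imp_compact_convex_hull)
  then obtain a b where ab: "inner a w < b" and ax: "\<forall>x\<in>C. b < inner a x"
    using separating_hyperplane_closed_point[of C w] wC by blast
  obtain k where kN: "k < N" and kc: "cos (psi + real k * alpha - (Arg a + pi)) \<ge> cos (alpha/2)"
    using near_angle[OF a0 api N N0] by blast
  have "V k \<in> C" unfolding C_def using kN by (auto intro: hull_inc)
  then have b1: "b < inner a (V k)" using ax by blast
  have "inner a (V k) = rho * cmod a * cos (psi + real k * alpha - Arg a)" unfolding V_def by (rule inner_cis)
  also have "cos (psi + real k * alpha - Arg a) = - cos (psi + real k * alpha - (Arg a + pi))"
    by (simp add: algebra_simps cos_diff)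
  finally have iv: "inner a (V k) \<le> - (rho * cmod a * cos (alpha/2))"
    using kc r0 by (simp add: mult_left_mono)
  have c2: "cos (alpha/2) \<ge> 0" using a0 api by (intro cos_ge_zero) auto
  have "- inner a w \<le> norm a * norm w" using norm_cauchy_schwarz[of "-a" w] by simp
  also have "norm w = rho * cos (alpha/2)" unfolding w_def norm_mult norm_of_real using u r0 c2 by simp
  finally have "- inner a w \<le> rho * cmod a * cos (alpha/2)" by (simp add: algebra_simps)
  then show False using iv b1 ab by linarith
qed


lemma upper_even:
  assumes m: "m \<ge> 1" and n: "n = 2*m" and g: "good n s a b"
  shows "b \<le> 2 * cot (pi / real n)"
proof -
  have np: "real n \<ge> 2" using m n by simp
  have b: "b = (\<Sum>i\<in>{1..n}. s i * sin (th n i))" using g unfolding good_def by simp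
  have "b \<le> (\<Sum>i\<in>{1..n}. \<bar>sin (th n i)\<bar>)"
    unfolding b
  proof (rule sum_mono)
    fix i assume "i \<in> {1..n}"
    then have "\<bar>s i\<bar> \<le> 1" using g unfolding good_def by auto
    then have "\<bar>s i\<bar> * \<bar>sin (th n i)\<bar> \<le> \<bar>sin (th n i)\<bar>" by (simp add: mult_left_le_one_le)
    then show "s i * sin (th n i) \<le> \<bar>sin (th n i)\<bar>" by (metis abs_ge_self abs_mult order.trans)
  qed
  also have "(\<Sum>i\<in>{1..n}. \<bar>sin (th n i)\<bar>) = (\<Sum>i\<in>{1..m}. \<bar>sin (th n i)\<bar>) + (\<Sum>i\<in>{m+1..m+m}. \<bar>sin (th n i)\<bar>)"
    proof -
    have S: "{1..n} = {1..m+m}" using n by auto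
    show ?thesis unfolding S by (rule sum.ub_add_nat) simp
  qed
  also have "(\<Sum>i\<in>{m+1..m+m}. \<bar>sin (th n i)\<bar>) = (\<Sum>i\<in>{1..m}. \<bar>sin (th n i)\<bar>)"
  proof -
    have "(\<Sum>i\<in>{m+1..m+m}. \<bar>sin (th n i)\<bar>) = (\<Sum>i\<in>{1..m}. \<bar>sin (th n (i + m))\<bar>)"
      using sum.shift_bounds_cl_nat_ivl[of "\<lambda>i. \<bar>sin (th n i)\<bar>" 1 m m] by (simp add: add.commute)
    also have "\<dots> = (\<Sum>i\<in>{1..m}. \<bar>sin (th n i)\<bar>)"
    proof (rule sum.cong[OF refl])
      fix i assume "i \<in> {1..m}"
      have "th n (i + m) = th n i + pi" using m unfolding n by (simp add: field_simps)
      then show "\<bar>sin (th n (i + m))\<bar> = \<bar>sin (th n i)\<bar>" by simp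
    qed
    finally show ?thesis .
  qed
  also have "(\<Sum>i\<in>{1..m}. \<bar>sin (th n i)\<bar>) = (\<Sum>i\<in>{1..m}. sin (0 + real i * (pi / real m)))"
  proof (rule sum.cong[OF refl])
    fix i assume i: "i \<in> {1..m}"
    have e: "th n i = 0 + real i * (pi / real m)" unfolding n using m by (simp add: field_simps)
    have "0 \<le> sin (th n i)" unfolding e using i m by (intro sin_ge_zero) (auto simp: field_simps)
    then show "\<bar>sin (th n i)\<bar> = sin (0 + real i * (pi / real m))" using e by simp
  qed
  also have "(\<Sum>i\<in>{1..m}. sin (0 + real i * (pi / real m))) = cot (pi / real n)"
  proof -
    have t: "2 * sin ((pi / real m)/2) * (\<Sum>i\<in>{1..m}. sin (0 + real i * (pi / real m))) = cos (0 + (pi/real m)/2) - cos (0 + (real m + 1/2) * (pi / real m))"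
      by (rule tele_sin)
    have "(real m + 1/2) * (pi / real m) = pi + pi / real n" using m unfolding n by (simp add: field_simps)
    moreover have "(pi/real m)/2 = pi / real n" unfolding n by simp
    moreover have "sin (pi / real n) > 0" using np by (intro sin_gt_zero) (auto simp: field_simps)
    ultimately show ?thesis using t by (simp add: cot_def field_simps)
  qed
  finally show ?thesis by simp
qed


lemma Wset_good: "w \<in> Wset n \<Longrightarrow> \<exists>s. good n s (Re w) (Im w)"
  unfolding Wset_def by auto

lemma Wset_rotpow: assumes "n \<ge> 2" "x \<in> Wset n" shows "cis (2*pi/real n) ^ k * x \<in> Wset n"
proof (induction k)
  case 0 then show ?case using assms by simp
next
  case (Suc k)
  have "cis (2*pi/real n) ^ Suc k * x = cis (2*pi/real n) * (cis (2*pi/real n) ^ k * x)" by (simp add: mult.assoc)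
  show ?case unfolding power_Suc mult.assoc using Wset_rot[OF assms(1) Suc] .
qed

lemma lower:
  assumes n: "n \<ge> 2" and u: "(nx, nz) \<in> unit_xz"
    and R: "real n * R = (if odd n then cot (pi / (2 * real n)) * cos (pi / (2 * real n)) else 2 * cot (pi / real n))"
  shows "\<exists>s. good n s (real n * R * nx) (real n * R * nz)"
proof -
  have np: "real n \<ge> 2" using n by simp
  define uu where "uu = Complex nx nz"
  have nu: "norm uu = 1" using u unfolding uu_def unit_xz_def by (simp add: cmod_def)
  have "complex_of_real (real n * R) * uu \<in> Wset n"
  proof (cases "odd n")
    case False
    then obtain m where m: "n = 2*m" by (metis evenE)
    have m1: "m \<ge> 1" using n m by simp
    have sp: "sin (pi / real n) > 0" using np by (intro sin_gt_zero) (auto simp: field_simps)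
    have A: "complex_of_real (2 / sin (pi / real n) * cos ((2*pi/real n)/2)) * uu \<in> Wset n"
    proof (rule disk[OF Wset_convex])
      show "\<And>x. x \<in> Wset n \<Longrightarrow> cis (2*pi/real n) * x \<in> Wset n" using Wset_rot[OF n] by blast
      show "complex_of_real (2 / sin (pi / real n)) * cis (pi/2 + pi / real n) \<in> Wset n" by (rule V0_even[OF m1 m])
      show "0 \<le> 2 / sin (pi / real n)" using sp by simp
      show "0 < 2*pi/real n" using np by simp
      show "2*pi/real n \<le> pi" using np by (simp add: field_simps)
      show "real n * (2*pi/real n) = 2*pi" using np by simp
      show "n > 0" using n by simp
      show "norm uu = 1" by (rule nu)
    qed
    have B: "2 / sin (pi / real n) * cos ((2*pi/real n)/2) = real n * R"
      using R False by (simp add: cot_def)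
    show ?thesis using A unfolding B .
  next
    case True
    then obtain M where M: "n = 2*M+1" by (metis oddE)
    have M1: "M \<ge> 1" using n M by simp
    have np3: "real n \<ge> 3" using M1 M by simp
    have cot0: "cot (pi / (2 * real n)) \<ge> 0"
    proof -
      have "sin (pi / (2 * real n)) > 0" "cos (pi / (2 * real n)) > 0" using np
        by (auto intro!: sin_gt_zero cos_gt_zero simp: field_simps)
      then show ?thesis by (simp add: cot_def)
    qed
    have rot: "cis (pi / real n) * x \<in> Wset n" if x: "x \<in> Wset n" for x
    proof -
      have "cis (2*pi/real n) ^ (M+1) = cis (real (M+1) * (2*pi/real n))" by (rule Complex.DeMoivre)
      also have "real (M+1) * (2*pi/real n) = pi + pi / real n" using np unfolding M by (simp add: field_simps)
      also have "cis (pi + pi / real n) = - cis (pi / real n)" by (simp add: complex_eq_iff cos_add sin_add)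
      finally have eq: "cis (pi / real n) * x = - (cis (2*pi/real n) ^ (M+1) * x)" by simp
      have w: "- (cis (2*pi/real n) ^ (M+1) * x) \<in> Wset n" by (rule Wset_neg[OF Wset_rotpow[OF n x]])
      show ?thesis unfolding eq using w .
    qed
    have A: "complex_of_real (cot (pi / (2 * real n)) * cos ((pi / real n)/2)) * uu \<in> Wset n"
    proof (rule disk[OF Wset_convex])
      show "\<And>x. x \<in> Wset n \<Longrightarrow> cis (pi/real n) * x \<in> Wset n" using rot by blast
      show "complex_of_real (cot (pi / (2 * real n))) * cis (pi/2) \<in> Wset n" by (rule V0_odd[OF M1 M])
      show "0 \<le> cot (pi / (2 * real n))" by (rule cot0)
      show "0 < pi/real n" using np by simp
      show "pi/real n \<le> pi" using np by (simp add: field_simps)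
      show "real (2*n) * (pi/real n) = 2*pi" using np by simp
      show "2*n > 0" using n by simp
      show "norm uu = 1" by (rule nu)
    qed
    have hh: "(pi / real n)/2 = pi/(2*real n)" by simp
    have B: "cot (pi / (2 * real n)) * cos ((pi / real n)/2) = real n * R"
      using R True unfolding hh by simp
    show ?thesis using A unfolding B .
  qed
  then obtain s where "good n s (Re (complex_of_real (real n * R) * uu)) (Im (complex_of_real (real n * R) * uu))"
    using Wset_good by blast
  then show ?thesis unfolding uu_def by auto
qed

theorem mainTheorem9:
  fixes n :: nat
  assumes "n \<ge> 2"
  shows "Rp {1..n} (Pi_rot n) =
    (if odd n then (1 / real n) * cot (pi / (2 * real n)) * cos (pi / (2 * real n))
     else (2 / real n) * cot (pi / real n))"
proof -
  define R where "R = (if odd n then (1 / real n) * cot (pi / (2 * real n)) * cos (pi / (2 * real n))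
     else (2 / real n) * cot (pi / real n))"
  have n: "n \<ge> 2" by fact
  have np: "real n \<ge> 2" using n by simp
  have nR: "real n * R = (if odd n then cot (pi / (2 * real n)) * cos (pi / (2 * real n)) else 2 * cot (pi / real n))"
    unfolding R_def using np by auto
  have in_set: "simulates {1..n} (Pi_rot n) unit_xz UNIV (Pp R)"
    by (rule imp_sim[OF n]) (rule lower[OF n _ nR])
  have ub: "r \<le> R" if r: "simulates {1..n} (Pi_rot n) unit_xz UNIV (Pp r)" for r
  proof (cases "odd n")
    case False
    then obtain m where m: "n = 2*m" by (metis evenE)
    have m1: "m \<ge> 1" using n m by simp
    have "(0, 1) \<in> unit_xz" unfolding unit_xz_def by simp
    then obtain s where "good n s (real n * r * 0) (real n * r * 1)" using sim_imp[OF n r] by blast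
    then have "real n * r \<le> 2 * cot (pi / real n)" using upper_even[OF m1 m] by simp
    then show ?thesis unfolding R_def using False np by (simp add: field_simps)
  next
    case True
    then obtain M where M: "n = 2*M+1" by (metis oddE)
    have M1: "M \<ge> 1" using n M by simp
    define y where "y = pi / (2 * real n)"
    have "(sin y, cos y) \<in> unit_xz" unfolding unit_xz_def by simp
    then obtain s where g: "good n s (real n * r * sin y) (real n * r * cos y)" using sim_imp[OF n r] by blast
    have "sin y * (real n * r * sin y) + cos y * (real n * r * cos y) = real n * r * (cos y * cos y + sin y * sin y)"
      by (simp add: algebra_simps del: sin_cos_squared_add3)
    also have "\<dots> = real n * r" by (simp only: sin_cos_squared_add3 mult_1_right)
    finally have "sin y * (real n * r * sin y) + cos y * (real n * r * cos y) = real n * r" .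
    then have h: "real n * r \<le> cos y ^ 2 / sin y" using upper_odd[OF M1 M g] unfolding y_def by blast
    have npos: "0 < real n" using np by simp
    have h': "r * real n \<le> cos y ^ 2 / sin y" using h by (simp add: mult.commute)
    have "r \<le> (cos y ^ 2 / sin y) / real n \<longleftrightarrow> r * real n \<le> cos y ^ 2 / sin y" by (rule pos_le_divide_eq[OF npos])
    then have "r \<le> (cos y ^ 2 / sin y) / real n" using h' by blast
    also have "(cos y ^ 2 / sin y) / real n = R" unfolding R_def y_def using True by (simp add: cot_def power2_eq_square)
    finally show ?thesis .
  qed
  have "Rp {1..n} (Pi_rot n) = R"
    unfolding Rp_def by (rule cSup_eq_maximum) (use in_set ub in auto)
  then show ?thesis unfolding R_def .
qed


end
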